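(* Suppose $x,x'\in(0,1)$ and $y\in(x,1)$. Let $y'\in(x',1)$ be such that $p_{x',1}(y')=p_{x,1}(y)$. Then $$p_{1,0}(x')-p_{1,0}(x)=p_{y',0}(x')-p_{y,0}(x).$$
   Context: For real $p\neq q$ and $w$ strictly between $p$ and $q$ (oriented interval $(p,q)$, $p>q$ allowed), $p_{p,q}(w)=\ln\frac{w-p}{q-w}$. *)

theory Defs
  imports Complex_Main
begin

text \<open>The function p_{p,q}(w) = ln((w-p)/(q-w)), meaningful for p \<noteq> q and w strictly
  between p and q (the oriented interval (p,q), p > q allowed).\<close>
definition plog :: "real \<Rightarrow> real \<Rightarrow> real \<Rightarrow> real" where
  "plog p q w = ln ((w - p) / (q - w))"

end

theory Submission
  imports Defs
begin

theorem proposition2p5: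
  fixes x x' y y' :: real
  assumes "0 < x" "x < 1" "0 < x'" "x' < 1"
    and "x < y" "y < 1"
    and "x' < y'" "y' < 1"
    and "plog x' 1 y' = plog x 1 y"
  shows "plog 1 0 x' - plog 1 0 x = plog y' 0 x' - plog y 0 x"
proof -
  have "(y'-x')/(1-y') = (y-x)/(1-y)"
    using assms by (simp add: plog_def)
  hence e1: "(y'-x')*(1-y) = (y-x)*(1-y')" using assms by (simp add: field_simps)
  have e2: "(y'-x')*(1-x) = (y-x)*(1-x')"
  proof -
    have "(y'-x')*(1-x) = (y'-x')*(1-y) + (y'-x')*(y-x)" by algebra
    also have "\<dots> = (y-x)*(1-y') + (y-x)*(y'-x')" using e1 by simp
    also have "\<dots> = (y-x)*(1-x')" by algebra
    finally show ?thesis .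
  qed
  have a: "plog 1 0 x' = ln (1-x') - ln x'" "plog 1 0 x = ln (1-x) - ln x"
    "plog y' 0 x' = ln (y'-x') - ln x'" "plog y 0 x = ln (y-x) - ln x"
  proof -
    have q: "\<And>a b::real. (a - b) / (0 - a) = (b - a) / a" by (metis diff_0 minus_diff_eq minus_divide_divide divide_minus_left)
    show "plog 1 0 x' = ln (1-x') - ln x'" "plog 1 0 x = ln (1-x) - ln x"
      "plog y' 0 x' = ln (y'-x') - ln x'" "plog y 0 x = ln (y-x) - ln x"
      unfolding plog_def q using assms by (simp_all add: ln_div)
  qed
  have "ln (y'-x') + ln (1-x) = ln (y-x) + ln (1-x')"
  proof -
    have "ln ((y'-x')*(1-x)) = ln ((y-x)*(1-x'))" using e2 by simp
    thus ?thesis using assms by (simp add: ln_mult)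
  qed
  thus ?thesis using a by simp
qed

end
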